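(* Let $d \geq 1$ and $n \geq 0$ be integers and let $\mathbf{x} \in \mathbb{Z}^{n+1}_{\mathrm{prim}}$. Then the ball $\mathcal{B}_{N_{d,n}}(\|\mathbf{x}\|)$ contains $N_{d,n} - 1$ linearly independent vectors of the lattice $\Lambda_{\nu_{d,n}(\mathbf{x})}$.
   Context: $\|\cdot\|$ is the Euclidean norm and $\mathcal{B}_N(u) = \{\mathbf{y} \in \mathbb{R}^N : \|\mathbf{y}\| \leq u\}$. $\mathbb{Z}^{N}_{\mathrm{prim}}$ is the set of vectors in $\mathbb{Z}^N$ whose coordinates have gcd $1$. $N_{d,n} = \binom{n+d}{d}$ and $\nu_{d,n} : \mathbb{R}^{n+1} \to \mathbb{R}^{N_{d,n}}$ is the Veronese map listing all monomials of degree $d$ in the $n+1$ coordinates in lexicographic order. For $\mathbf{c} \in \mathbb{Z}^N$, $\Lambda_{\mathbf{c}} = \{\mathbf{y} \in \mathbb{Z}^N : \langle \mathbf{c}, \mathbf{y}\rangle = 0\}$, with $\langle\cdot,\cdot\rangle$ the Euclidean inner product. *)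

theory Defs
  imports Complex_Main
begin

text \<open>Vectors of \<open>\<int>^N\<close> / \<open>\<real>^N\<close> are represented as lists of length N.\<close>

definition vnorm :: "int list \<Rightarrow> real" where
  "vnorm y = sqrt (\<Sum>i<length y. (real_of_int (y ! i))\<^sup>2)"

definition primitive :: "int list \<Rightarrow> bool" where
  "primitive x \<longleftrightarrow> Gcd (set x) = 1"

definition N_dn :: "nat \<Rightarrow> nat \<Rightarrow> nat" where
  "N_dn d n = (n + d) choose d"

text \<open>Exponent vectors of length m with total degree d, in lexicographic order
  (x_0^d first).\<close>
fun exps :: "nat \<Rightarrow> nat \<Rightarrow> nat list list" where
  "exps 0 d = (if d = 0 then [[]] else [])"
| "exps (Suc m) d = concat (map (\<lambda>a. map (\<lambda>e. a # e) (exps m (d - a))) (rev [0..<Suc d]))"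

definition veronese :: "nat \<Rightarrow> nat \<Rightarrow> int list \<Rightarrow> int list" where
  "veronese d n x = map (\<lambda>e. \<Prod>i<Suc n. (x ! i) ^ (e ! i)) (exps (Suc n) d)"

definition iprod :: "int list \<Rightarrow> int list \<Rightarrow> int" where
  "iprod c y = (\<Sum>i<length c. c ! i * y ! i)"

definition Lambda :: "int list \<Rightarrow> int list set" where
  "Lambda c = {y. length y = length c \<and> iprod c y = 0}"

definition lin_indep :: "nat \<Rightarrow> int list list \<Rightarrow> bool" where
  "lin_indep N ys \<longleftrightarrow>
     (\<forall>a :: nat \<Rightarrow> real.
        (\<forall>j<N. (\<Sum>i<length ys. a i * real_of_int (ys ! i ! j)) = 0) \<longrightarrow>
        (\<forall>i<length ys. a i = 0))"

end

theory Submission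
  imports Defs
begin

lemma set_exps: "set (exps m d) = {e. length e = m \<and> sum_list e = d}"
proof (induction m arbitrary: d)
  case 0 then show ?case by auto
next
  case (Suc m)
  show ?case
  proof (intro set_eqI iffI)
    fix e assume "e \<in> set (exps (Suc m) d)"
    then show "e \<in> {e. length e = Suc m \<and> sum_list e = d}" using Suc by auto
  next
    fix e assume "e \<in> {e. length e = Suc m \<and> sum_list e = d}"
    then obtain a e' where "e = a # e'" "length e' = m" "a + sum_list e' = d"
      by (cases e) auto
    then show "e \<in> set (exps (Suc m) d)" using Suc by force
  qed
qed

lemma distinct_concat_heads:
  "distinct as \<Longrightarrow> (\<forall>a\<in>set as. distinct (G a)) \<Longrightarrow> distinct (concat (map (\<lambda>a. map ((#) a) (G a)) as))"
  by (induction as) (auto simp: distinct_map)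

lemma distinct_exps: "distinct (exps m d)"
proof (induction m arbitrary: d)
  case 0 then show ?case by auto
next
  case (Suc m)
  show ?case unfolding exps.simps
    by (rule distinct_concat_heads) (auto simp: Suc)
qed

lemma length_exps_sum: "length (exps (Suc m) d) = (\<Sum>a\<le>d. length (exps m (d - a)))"
proof -
  have "length (exps (Suc m) d) = sum_list (map (\<lambda>a. length (exps m (d - a))) (rev [0..<Suc d]))"
    by (simp only: exps.simps length_concat map_map comp_def length_map)
  also have "\<dots> = (\<Sum>a\<le>d. length (exps m (d - a)))"
    by (subst sum_list_distinct_conv_sum_set, simp, simp only: set_rev set_upt atLeast0LessThan lessThan_Suc_atMost)
  finally show ?thesis .
qed

lemma length_exps: "length (exps (Suc m) d) = (m + d) choose d"
proof (induction m arbitrary: d)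
  case 0 
  have "length (exps (Suc 0) d) = (\<Sum>a\<le>d. (if a = d then 1 else 0))"
    unfolding length_exps_sum by (rule sum.cong) auto
  also have "\<dots> = 1" by simp
  finally show ?case by simp
next
  case (Suc m)
  have "length (exps (Suc (Suc m)) d) = (\<Sum>a\<in>{..d}. (m + (d - a)) choose (d - a))"
    by (subst length_exps_sum) (simp only: Suc)
  also have "\<dots> = (\<Sum>b\<in>{..d}. (m + b) choose b)"
    by (rule sum.reindex_bij_witness[of _ "\<lambda>b. d - b" "\<lambda>b. d - b"]) auto
  also have "\<dots> = (Suc m + d) choose d" by (simp add: sum_choose_lower)
  finally show ?case .
qed

lemma sum_list_upd_nat: "i < length xs \<Longrightarrow> sum_list (xs[i := v]) + xs ! i = sum_list xs + (v::nat)"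
  by (induction xs arbitrary: i) (auto split: nat.splits)

lemma sum_nth_distinct: "distinct xs \<Longrightarrow> (\<Sum>p<length xs. h (xs ! p)) = sum h (set xs)"
proof -
  assume "distinct xs"
  then have "sum h (set xs) = sum_list (map h xs)" by (simp add: sum_list_distinct_conv_sum_set)
  also have "\<dots> = (\<Sum>p<length xs. h (xs ! p))"
    by (simp add: sum_list_sum_nth atLeast0LessThan)
  finally show ?thesis by simp
qed

lemma sum_two: "finite S \<Longrightarrow> f \<in> S \<Longrightarrow> f' \<in> S \<Longrightarrow> f \<noteq> f' \<Longrightarrow>
   (\<forall>g\<in>S. g \<noteq> f \<and> g \<noteq> f' \<longrightarrow> H g = 0) \<Longrightarrow> sum H S = H f + H f'"
proof -
  assume a: "finite S" "f \<in> S" "f' \<in> S" "f \<noteq> f'" "\<forall>g\<in>S. g \<noteq> f \<and> g \<noteq> f' \<longrightarrow> H g = 0"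
  have "sum H S = sum H {f, f'}" by (rule sum.mono_neutral_right) (use a in auto)
  then show ?thesis using a by simp
qed

lemma mono_step:
  fixes x :: "int list" and g :: "nat list"
  assumes "j < Suc n" "length g = Suc n"
  shows "(\<Prod>t<Suc n. x!t ^ (g[j := g!j + 1])!t) = (\<Prod>t<Suc n. x!t ^ g!t) * x!j"
proof -
  have "(\<Prod>t<Suc n. x!t ^ (g[j := g!j + 1])!t) = x!j ^ ((g[j := g!j + 1])!j) * (\<Prod>t\<in>{..<Suc n}-{j}. x!t ^ (g[j := g!j + 1])!t)"
    by (rule prod.remove) (use assms in auto)
  also have "(\<Prod>t\<in>{..<Suc n}-{j}. x!t ^ (g[j := g!j + 1])!t) = (\<Prod>t\<in>{..<Suc n}-{j}. x!t ^ g!t)"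
    by (rule prod.cong) auto
  also have "(\<Prod>t<Suc n. x!t ^ g!t) = x!j ^ g!j * (\<Prod>t\<in>{..<Suc n}-{j}. x!t ^ g!t)"
    by (rule prod.remove) (use assms in auto)
  ultimately show ?thesis using assms by simp
qed

theorem lemma5:
  fixes d n :: nat and x :: "int list"
  assumes "d \<ge> 1" and "length x = Suc n" and "primitive x"
  shows "\<exists>ys :: int list list.
           length ys = N_dn d n - 1 \<and>
           (\<forall>y \<in> set ys. y \<in> Lambda (veronese d n x) \<and> vnorm y \<le> vnorm x) \<and>
           lin_indep (N_dn d n) ys"
proof -
  have lx: "length x = Suc n" by fact
  obtain k where k: "k < Suc n" "x ! k \<noteq> 0"
  proof (rule ccontr)
    assume "\<not> thesis"
    with that have "\<forall>k<Suc n. x ! k = 0" by blast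
    then have "set x = {0}" using lx by (auto simp: in_set_conv_nth) (metis zero_less_Suc)
    then show False using assms(3) by (simp add: primitive_def)
  qed
  define E where "E = exps (Suc n) d"
  have dE: "distinct E" unfolding E_def by (rule distinct_exps)
  have sE: "set E = {e. length e = Suc n \<and> sum_list e = d}" unfolding E_def by (rule set_exps)
  have lE: "length E = N_dn d n" unfolding E_def N_dn_def by (rule length_exps)
  define mono :: "nat list \<Rightarrow> int" where "mono e = (\<Prod>t<Suc n. x!t ^ e!t)" for e
  have ver: "veronese d n x = map mono E" unfolding veronese_def mono_def E_def by simp
  define top where "top = (replicate (Suc n) 0)[k := d]"
  have top_in: "top \<in> set E"
  proof -
    have e: "sum_list top + replicate (Suc n) (0::nat) ! k = sum_list (replicate (Suc n) (0::nat)) + d"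
      unfolding top_def by (rule sum_list_upd_nat) (use k in simp)
    have z: "replicate (Suc n) (0::nat) ! k = 0" using k(1) by (simp only: nth_replicate length_replicate)
    have s0: "sum_list (replicate (Suc n) (0::nat)) = 0" by (simp del: replicate_Suc)
    have "sum_list top = d" using e unfolding z s0 by simp
    moreover have "length top = Suc n" by (simp add: top_def del: replicate_Suc)
    ultimately show ?thesis by (simp add: sE)
  qed
  have ex_i: "\<exists>i. i < Suc n \<and> i \<noteq> k \<and> 0 < f ! i" if f: "f \<in> set E" "f \<noteq> top" for f
  proof (rule ccontr)
    assume "\<not> ?thesis"
    then have z: "\<forall>i<Suc n. i \<noteq> k \<longrightarrow> f ! i = 0" by auto
    have lf: "length f = Suc n" and sf: "sum_list f = d" using f sE by auto
    have "sum_list f = (\<Sum>i<Suc n. f ! i)" using lf by (simp add: sum_list_sum_nth atLeast0LessThan)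
    also have "\<dots> = f ! k + (\<Sum>i\<in>{..<Suc n}-{k}. f ! i)" by (rule sum.remove) (use k in auto)
    also have "(\<Sum>i\<in>{..<Suc n}-{k}. f ! i) = 0" using z by simp
    finally have "f ! k = d" using sf by simp
    then have "f = top" using lf z k unfolding top_def
      by (intro nth_equalityI) (auto simp: nth_list_update simp del: replicate_Suc)
    then show False using f by simp
  qed
  define ii :: "nat list \<Rightarrow> nat" where "ii f = (SOME i. i < Suc n \<and> i \<noteq> k \<and> 0 < f ! i)" for f
  have ii: "ii f < Suc n \<and> ii f \<noteq> k \<and> 0 < f ! ii f" if "f \<in> set E" "f \<noteq> top" for f
    unfolding ii_def by (rule someI_ex) (rule ex_i[OF that])
  define sw :: "nat list \<Rightarrow> nat list" where "sw f = f[ii f := f ! ii f - 1, k := f ! k + 1]" for f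
  define h :: "nat list \<Rightarrow> nat list" where "h f = f[ii f := f ! ii f - 1]" for f
  have sw_props: "sw f \<in> set E \<and> sw f ! k = f ! k + 1 \<and> sw f \<noteq> f \<and>
      mono f * x ! k = mono (sw f) * x ! ii f" if f: "f \<in> set E" "f \<noteq> top" for f
  proof -
    have lf: "length f = Suc n" and sf: "sum_list f = d" using f sE by auto
    note i = ii[OF f]
    have lh: "length (h f) = Suc n" using lf by (simp add: h_def)
    have swh: "sw f = (h f)[k := h f ! k + 1]" using i by (simp add: sw_def h_def)
    have fh: "f = (h f)[ii f := h f ! ii f + 1]" using i lf by (simp add: h_def)
    have s1: "sum_list (h f) + f ! ii f = sum_list f + (f ! ii f - 1)"
      unfolding h_def by (rule sum_list_upd_nat) (use i lf in simp)
    have s2: "sum_list (sw f) + h f ! k = sum_list (h f) + (h f ! k + 1)"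
      unfolding swh by (rule sum_list_upd_nat) (use k lh in simp)
    have "sum_list (sw f) = d" using s1 s2 sf i by linarith
    moreover have "length (sw f) = Suc n" using lf by (simp add: sw_def)
    ultimately have "sw f \<in> set E" using sE by simp
    moreover have "sw f ! k = f ! k + 1" using k lf by (simp add: sw_def)
    moreover have "sw f \<noteq> f" using calculation(2) by auto
    moreover have "mono f * x ! k = mono (sw f) * x ! ii f"
    proof -
      have "mono f = mono (h f) * x ! ii f"
        unfolding mono_def by (subst fh) (rule mono_step; use i lh in simp)
      moreover have "mono (sw f) = mono (h f) * x ! k"
        unfolding mono_def swh by (rule mono_step; use k lh in simp)
      ultimately show ?thesis by simp
    qed
    ultimately show ?thesis by blast
  qed
  define yv :: "nat list \<Rightarrow> nat list \<Rightarrow> int" where "yv f g = (if g = f then x ! k else if g = sw f then - (x ! ii f) else 0)" for f g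
  define F where "F = filter (\<lambda>f. f \<noteq> top) E"
  have dF: "distinct F" using dE by (simp add: F_def)
  have sF: "set F = set E - {top}" by (auto simp: F_def)
  have lF: "length F = N_dn d n - 1"
  proof -
    have "length F = card (set F)" using dF by (simp add: distinct_card)
    also have "\<dots> = card (set E) - 1" using sF top_in by simp
    also have "\<dots> = length E - 1" using dE by (simp add: distinct_card)
    finally show ?thesis using lE by simp
  qed
  define ys where "ys = map (\<lambda>f. map (yv f) E) F"
  show ?thesis
  proof (intro exI conjI ballI)
    show "length ys = N_dn d n - 1" using lF by (simp add: ys_def)
  next
    fix y assume "y \<in> set ys"
    then obtain f where fF: "f \<in> set F" and y: "y = map (yv f) E" by (auto simp: ys_def)
    have f: "f \<in> set E" "f \<noteq> top" using fF sF by auto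
    note sp = sw_props[OF f]
    note i = ii[OF f]
    have "iprod (veronese d n x) y = (\<Sum>p<length E. mono (E ! p) * yv f (E ! p))"
      unfolding iprod_def ver y by simp
    also have "\<dots> = (\<Sum>g\<in>set E. mono g * yv f g)" by (rule sum_nth_distinct[OF dE])
    also have "\<dots> = mono f * yv f f + mono (sw f) * yv f (sw f)"
      by (rule sum_two) (use f sp in \<open>auto simp: yv_def\<close>)
    also have "\<dots> = 0" using sp by (simp add: yv_def)
    finally have "iprod (veronese d n x) y = 0" .
    then show "y \<in> Lambda (veronese d n x)" by (simp add: Lambda_def ver y)
    have "(\<Sum>p<length E. (real_of_int (yv f (E ! p)))\<^sup>2) = (\<Sum>g\<in>set E. (real_of_int (yv f g))\<^sup>2)"
      by (rule sum_nth_distinct[OF dE])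
    also have "\<dots> = (real_of_int (yv f f))\<^sup>2 + (real_of_int (yv f (sw f)))\<^sup>2"
      by (rule sum_two) (use f sp in \<open>auto simp: yv_def\<close>)
    also have "\<dots> = (\<Sum>t\<in>{k, ii f}. (real_of_int (x ! t))\<^sup>2)"
      using sp i by (simp add: yv_def)
    also have "\<dots> \<le> (\<Sum>t<length x. (real_of_int (x ! t))\<^sup>2)"
      by (rule sum_mono2) (use i k lx in auto)
    finally have S: "(\<Sum>p<length E. (real_of_int (yv f (E ! p)))\<^sup>2) \<le> (\<Sum>t<length x. (real_of_int (x ! t))\<^sup>2)" .
    show "vnorm y \<le> vnorm x" unfolding vnorm_def y using real_sqrt_le_mono[OF S] by simp
  next
    show "lin_indep (N_dn d n) ys"
      unfolding lin_indep_def
    proof (intro allI impI)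
      fix a :: "nat \<Rightarrow> real" and r
      assume H: "\<forall>j<N_dn d n. (\<Sum>i<length ys. a i * real_of_int (ys ! i ! j)) = 0"
      assume r: "r < length ys"
      show "a r = 0"
      proof (rule ccontr)
        assume "a r \<noteq> 0"
        then have rF: "r < length F \<and> a r \<noteq> 0" using r by (simp add: ys_def)
        have "\<exists>r0. (r0 < length F \<and> a r0 \<noteq> 0) \<and> (\<forall>s. s < length F \<and> a s \<noteq> 0 \<longrightarrow> F ! r0 ! k \<le> F ! s ! k)"
          by (rule ex_has_least_nat) (rule rF)
        then obtain r0 where r0all: "(r0 < length F \<and> a r0 \<noteq> 0) \<and> (\<forall>s. s < length F \<and> a s \<noteq> 0 \<longrightarrow> F ! r0 ! k \<le> F ! s ! k)"
          by blast
        note r0c = conjunct1[OF r0all] and leastc = conjunct2[OF r0all]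
        have r0: "r0 < length F" "a r0 \<noteq> 0" using r0c by auto
        have least: "\<And>s. s < length F \<and> a s \<noteq> 0 \<Longrightarrow> F ! r0 ! k \<le> F ! s ! k" by (rule leastc[rule_format])
        define g where "g = F ! r0"
        have "g \<in> set F" unfolding g_def using r0(1) by (rule nth_mem)
        then have gE: "g \<in> set E" using sF by simp
        then obtain j where j: "j < length E" "E ! j = g" by (auto simp: in_set_conv_nth)
        have "(\<Sum>s<length F. a s * real_of_int (yv (F ! s) g)) = 0"
        proof -
          have jN: "j < N_dn d n" using j lE by simp
          have "(\<Sum>i<length ys. a i * real_of_int (ys ! i ! j)) = 0" using H jN by blast
          then show ?thesis using j by (simp add: ys_def)
        qed
        moreover have "(\<Sum>s<length F. a s * real_of_int (yv (F ! s) g))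
            = a r0 * real_of_int (yv (F ! r0) g) + (\<Sum>s\<in>{..<length F}-{r0}. a s * real_of_int (yv (F ! s) g))"
          by (rule sum.remove) (use r0 in auto)
        moreover have "(\<Sum>s\<in>{..<length F}-{r0}. a s * real_of_int (yv (F ! s) g)) = 0"
        proof (rule sum.neutral, rule ballI)
          fix s assume s: "s \<in> {..<length F}-{r0}"
          have "F ! s \<in> set F" using s by simp
          then have sE': "F ! s \<in> set E" "F ! s \<noteq> top" using sF by auto
          have "g \<noteq> F ! s" using s r0 dF by (auto simp: g_def nth_eq_iff_index_eq)
          moreover have "a s = 0" if "g = sw (F ! s)"
          proof (rule ccontr)
            assume "a s \<noteq> 0"
            then have "F ! r0 ! k \<le> F ! s ! k" using least s by auto
            moreover have "g ! k = F ! s ! k + 1" using that sw_props[OF sE'] by simp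
            ultimately show False by (simp add: g_def)
          qed
          ultimately show "a s * real_of_int (yv (F ! s) g) = 0" by (auto simp: yv_def)
        qed
        ultimately have "a r0 * real_of_int (x ! k) = 0" by (simp add: yv_def g_def)
        then show False using r0 k by simp
      qed
    qed
  qed
qed

end
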